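(* A graph $G$ on $n$ vertices is an outerplanar triangulation of pathwidth at most $2$ if and only if $G\in PW_2(n)$.
   Context: An outerplanar triangulation is a planar graph that can be drawn in the plane so that the outer face is incident with all vertices and every other face is incident with exactly three vertices. A path decomposition of $G$ is a sequence $(G_i)_{i=1}^m$ of subgraphs of $G$ such that every edge of $G$ lies in some $G_i$ and, for every vertex $v$, the indices $i$ with $v\in G_i$ form a contiguous interval; the pathwidth of $G$ is the least $k$ such that $G$ has a path decomposition with every $G_i$ having at most $k+1$ vertices. $PW_2(n)$ is the class of outerplanar triangulations $G$ on $n$ vertices whose vertex set can be partitioned into two disjoint sets $V_u\cup V_v=V(G)$ such that the induced subgraphs $G[V_u]$ and $G[V_v]$ are paths. *)

theory Defs
  imports Main
begin

definition simple_graph :: "'a set \<Rightarrow> 'a set set \<Rightarrow> bool" where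
  "simple_graph V E \<longleftrightarrow> finite V \<and> (\<forall>e\<in>E. e \<subseteq> V \<and> card e = 2)"

definition induced_path :: "'a set set \<Rightarrow> 'a set \<Rightarrow> bool" where
  "induced_path E S \<longleftrightarrow>
     (\<exists>xs. xs \<noteq> [] \<and> distinct xs \<and> set xs = S \<and>
        (\<forall>i<length xs. \<forall>j<length xs. {xs!i, xs!j} \<in> E \<longleftrightarrow> (i = Suc j \<or> j = Suc i)))"

text \<open>Path decomposition, given by the vertex sets (bags) of the subgraphs G_i:
  every edge lies in some bag, and for every vertex the indices of bags containing it
  form a contiguous interval.\<close>
definition path_decomposition :: "'a set \<Rightarrow> 'a set set \<Rightarrow> 'a set list \<Rightarrow> bool" where
  "path_decomposition V E Bs \<longleftrightarrow>
     (\<forall>B\<in>set Bs. B \<subseteq> V) \<and>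
     (\<forall>e\<in>E. \<exists>B\<in>set Bs. e \<subseteq> B) \<and>
     (\<forall>v i j k. i \<le> j \<and> j \<le> k \<and> k < length Bs \<and> v \<in> Bs!i \<and> v \<in> Bs!k \<longrightarrow> v \<in> Bs!j)"

definition pathwidth :: "'a set \<Rightarrow> 'a set set \<Rightarrow> nat" where
  "pathwidth V E = (LEAST k. \<exists>Bs. path_decomposition V E Bs \<and> (\<forall>B\<in>set Bs. card B \<le> k + 1))"

text \<open>Outerplanar triangulation (maximal outerplanar graph), described combinatorially:
  the vertices can be placed in cyclic order f 0, ..., f (n-1) around the outer face
  (a polygon), and the edges are the n polygon sides together with a set D of
  pairwise non-crossing diagonals triangulating the polygon (exactly n-3 of them).\<close>
definition outerplanar_triangulation :: "'a set \<Rightarrow> 'a set set \<Rightarrow> bool" where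
  "outerplanar_triangulation V E \<longleftrightarrow> simple_graph V E \<and> 3 \<le> card V \<and>
     (\<exists>f D. bij_betw f {..<card V} V \<and>
        D \<subseteq> {(i, j). i < j \<and> j < card V \<and> 2 \<le> j - i \<and> \<not> (i = 0 \<and> j = card V - 1)} \<and>
        (\<forall>(a, b)\<in>D. \<forall>(c, d)\<in>D. \<not> (a < c \<and> c < b \<and> b < d)) \<and>
        card D = card V - 3 \<and>
        E = {{f i, f (Suc i mod card V)} | i. i < card V} \<union> (\<lambda>(i, j). {f i, f j}) ` D)"

definition PW2 :: "nat \<Rightarrow> ('a set \<times> 'a set set) set" where
  "PW2 n = {(V, E). outerplanar_triangulation V E \<and> card V = n \<and>
     (\<exists>Vu Vv. Vu \<union> Vv = V \<and> Vu \<inter> Vv = {} \<and> induced_path E Vu \<and> induced_path E Vv)}"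

end

theory Submission
  imports Defs
begin


lemma chord_bound:
  fixes S :: "(nat \<times> nat) set"
  assumes "S \<subseteq> {(i,j). l \<le> i \<and> i<j \<and> j \<le> r \<and> 2 \<le> j-i}"
    "\<forall>(a,b)\<in>S. \<forall>(c,d)\<in>S. \<not>(a<c \<and> c<b \<and> b<d)" "l<r"
  shows "card S + 1 \<le> r - l"
  using assms
proof (induction "r - l" arbitrary: l r S rule: less_induct)
  case less
  have fin: "finite S"
  proof (rule finite_subset)
    show "S \<subseteq> {..r} \<times> {..r}" using less.prems(1) by auto
  qed auto
  show ?case
  proof (cases "r = Suc l")
    case True
    then have "S = {}" using less.prems(1) by auto
    then show ?thesis using True by simp
  next
    case False
    define S' where "S' = S - {(l,r)}"
    have cS: "card S \<le> card S' + 1" unfolding S'_def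
      using fin by (cases "(l,r) \<in> S") (auto simp: card_Diff_singleton_if)
    have ncS': "\<forall>(a,b)\<in>S'. \<forall>(c,d)\<in>S'. \<not>(a<c \<and> c<b \<and> b<d)" using less.prems(2) unfolding S'_def by auto
    show ?thesis
    proof (cases "\<exists>j. (l,j) \<in> S'")
      case True
      define J where "J = {j. (l,j)\<in>S'}"
      have finJ: "finite J"
      proof (rule finite_subset)
        show "J \<subseteq> {..r}" using less.prems(1) by (auto simp: J_def S'_def)
      qed auto
      define k where "k = Max J"
      have "J \<noteq> {}" using True J_def by auto
      then have kJ: "k \<in> J" unfolding k_def using finJ by (rule_tac Max_in) auto
      have kmax: "\<And>j. (l,j)\<in>S' \<Longrightarrow> j \<le> k" unfolding k_def using finJ J_def by auto
      have lk: "(l,k) \<in> S'" using kJ J_def by auto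
      have kr: "l+2 \<le> k" "k < r" using lk less.prems(1) S'_def by auto
      define S1 where "S1 = S' \<inter> {(i,j). l \<le> i \<and> i<j \<and> j \<le> k \<and> 2 \<le> j-i}"
      define S2 where "S2 = S' \<inter> {(i,j). k \<le> i \<and> i<j \<and> j \<le> r \<and> 2 \<le> j-i}"
      have sub: "S' \<subseteq> S1 \<union> S2"
      proof
        fix p assume pS: "p \<in> S'"
        obtain i j where p: "p = (i,j)" by fastforce
        have ij: "l \<le> i" "i<j" "j \<le> r" "2 \<le> j-i" using pS p less.prems(1) S'_def by auto
        have "\<not>(i<k \<and> k<j)"
        proof
          assume a: "i<k \<and> k<j"
          show False
          proof (cases "i = l")
            case True then show ?thesis using kmax[of j] pS p a by auto
          next
            case False
            then have "l<i" using ij by auto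
            then show ?thesis using ncS' lk pS p a by fastforce
          qed
        qed
        then show "p \<in> S1 \<union> S2" using ij pS p unfolding S1_def S2_def by auto
      qed
      have c1: "card S1 + 1 \<le> k - l"
        by (rule less.hyps) (use kr ncS' in \<open>auto simp: S1_def\<close>)
      have c2: "card S2 + 1 \<le> r - k"
        by (rule less.hyps) (use kr ncS' in \<open>auto simp: S2_def\<close>)
      have fin1: "finite S1" "finite S2" using fin S'_def S1_def S2_def by auto
      have "card S' \<le> card S1 + card S2"
        by (meson card_Un_le card_mono fin1 finite_UnI le_trans sub)
      then show ?thesis using cS c1 c2 kr by linarith
    next
      case False
      have "card S' + 1 \<le> r - Suc l"
      proof (rule less.hyps)
        show "r - Suc l < r - l" using less.prems by auto
        show "S' \<subseteq> {(i, j). Suc l \<le> i \<and> i < j \<and> j \<le> r \<and> 2 \<le> j - i}"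
        proof
          fix p assume pS: "p \<in> S'"
          obtain i j where p: "p = (i,j)" by fastforce
          then show "p \<in> {(i, j). Suc l \<le> i \<and> i < j \<and> j \<le> r \<and> 2 \<le> j - i}"
            using pS False less.prems(1) S'_def by (cases "i = l") auto
        qed
        show "Suc l < r" using less.prems(3) \<open>r \<noteq> Suc l\<close> by auto
      qed (use ncS' in auto)
      then show ?thesis using cS by linarith
    qed
  qed
qed



locale tri =
  fixes n :: nat and D :: "(nat \<times> nat) set"
  assumes n3: "3 \<le> n"
    and Dv: "D \<subseteq> {(i, j). i < j \<and> j < n \<and> 2 \<le> j - i \<and> \<not> (i = 0 \<and> j = n - 1)}"
    and Dnc: "\<forall>(a, b)\<in>D. \<forall>(c, d)\<in>D. \<not> (a < c \<and> c < b \<and> b < d)"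
    and Dcard: "card D = n - 3"
begin

definition ed :: "nat \<Rightarrow> nat \<Rightarrow> bool" where
  "ed i j \<longleftrightarrow> j = Suc i mod n \<or> i = Suc j mod n \<or> (i,j) \<in> D \<or> (j,i) \<in> D"

lemma ed_sym: "ed i j = ed j i" unfolding ed_def by auto

definition D' where "D' = insert (0, n-1) D"

lemma D_mem: "(i,j) \<in> D \<Longrightarrow> i < j \<and> j < n \<and> 2 \<le> j - i \<and> \<not> (i = 0 \<and> j = n - 1)"
  using Dv by auto

lemma D_cross: "(a,b) \<in> D \<Longrightarrow> (c,d) \<in> D \<Longrightarrow> a < c \<Longrightarrow> c < b \<Longrightarrow> b < d \<Longrightarrow> False"
  using Dnc by fastforce

lemma finD: "finite D"
  by (rule finite_subset[of _ "{..<n} \<times> {..<n}"]) (use Dv in auto)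

lemma D'_nc: "\<forall>(a, b)\<in>D'. \<forall>(c, d)\<in>D'. \<not> (a < c \<and> c < b \<and> b < d)"
  unfolding D'_def using Dnc Dv by fastforce

lemma D'_cross: "(a,b) \<in> D' \<Longrightarrow> (c,d) \<in> D' \<Longrightarrow> a < c \<Longrightarrow> c < b \<Longrightarrow> b < d \<Longrightarrow> False"
  using D'_nc by fastforce

lemma D'_mem: "(i,j) \<in> D' \<Longrightarrow> i < j \<and> j < n \<and> 2 \<le> j - i"
  using Dv n3 unfolding D'_def by auto

lemma card_D': "card D' = n - 2"
proof -
  have "(0, n-1) \<notin> D" using Dv by auto
  then show ?thesis unfolding D'_def using finD Dcard n3 by simp
qed

lemma ed_iff: assumes "i < j" "j < n" shows "ed i j \<longleftrightarrow> j = Suc i \<or> (i,j) \<in> D'"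
proof
  assume "ed i j"
  then consider "j = Suc i mod n" | "i = Suc j mod n" | "(i,j) \<in> D" | "(j,i) \<in> D" unfolding ed_def by blast
  then show "j = Suc i \<or> (i,j) \<in> D'"
  proof cases
    case 1 then show ?thesis using assms by (cases "Suc i < n") auto
  next
    case 2
    then have "Suc j = n" using assms by (cases "Suc j < n") auto
    then show ?thesis using 2 assms unfolding D'_def by auto
  next
    case 3 then show ?thesis unfolding D'_def by auto
  next
    case 4 then show ?thesis using Dv assms by auto
  qed
next
  assume "j = Suc i \<or> (i,j) \<in> D'"
  then show "ed i j" unfolding ed_def D'_def using assms n3 by auto
qed

lemma ed_iff_lt: assumes "i < j" "j < n" "\<not>(i = 0 \<and> j = n-1)"
  shows "ed i j \<longleftrightarrow> j = Suc i \<or> (i,j) \<in> D"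
  using ed_iff[OF assms(1,2)] assms unfolding D'_def by auto

lemma ed_cyc: "i < n \<Longrightarrow> ed i (Suc i mod n)" unfolding ed_def by auto
lemma ed_Suc: "Suc i < n \<Longrightarrow> ed i (Suc i)" unfolding ed_def by auto
lemma ed_0: "ed 0 (n-1)" unfolding ed_def using n3 by auto
lemma ed_D: "(i,j) \<in> D \<Longrightarrow> ed i j" unfolding ed_def by auto

lemma T1: assumes ij: "(i,j) \<in> D'" shows "\<exists>k. i < k \<and> k < j \<and> ed i k \<and> ed k j"
proof (rule ccontr)
  assume nex: "\<not> ?thesis"
  have ij': "i < j" "j < n" "2 \<le> j - i" using D'_mem[OF ij] by auto
  define B where "B = {b. (i,b) \<in> D' \<and> b < j}"
  have finB: "finite B" unfolding B_def by auto
  define k where "k = (if B = {} then Suc i else Max B)"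
  have kprop: "i < k \<and> k < j \<and> ed i k"
  proof (cases "B = {}")
    case True then show ?thesis using ij' k_def ed_Suc by auto
  next
    case False
    then have "k \<in> B" using finB k_def Max_in by auto
    then show ?thesis using B_def D'_mem ed_iff by auto
  qed
  have kmax: "\<And>b. (i,b) \<in> D' \<Longrightarrow> b < j \<Longrightarrow> b \<le> k"
    using finB k_def B_def by (metis (mono_tags, lifting) Max_ge empty_iff mem_Collect_eq)
  have kB: "\<And>a. i < a \<Longrightarrow> a < k \<Longrightarrow> (i,k) \<in> D'"
  proof -
    fix a assume "i < a" "a < k"
    then have "B \<noteq> {}" using k_def by auto
    then have "k \<in> B" using finB k_def Max_in by auto
    then show "(i,k) \<in> D'" using B_def by auto
  qed
  have ned: "\<not> ed k j" using nex kprop by blast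
  have kj: "(k,j) \<notin> D'" "j \<noteq> Suc k" using ned ed_iff kprop ij' by auto
  define S where "S = insert (k,j) D'"
  have "card S + 1 \<le> (n-1) - 0"
  proof (rule chord_bound)
    show "S \<subseteq> {(i, j). 0 \<le> i \<and> i < j \<and> j \<le> n - 1 \<and> 2 \<le> j - i}"
      unfolding S_def using D'_mem kprop kj ij' by fastforce
    show "0 < n - 1" using n3 by auto
    show "\<forall>(a, b)\<in>S. \<forall>(c, d)\<in>S. \<not> (a < c \<and> c < b \<and> b < d)"
    proof (intro ballI, clarify)
      fix a b c d
      assume ab: "(a,b) \<in> S" and cd: "(c,d) \<in> S" and x: "a < c" "c < b" "b < d"
      have c1: "False" if "(c,d) \<in> D'" "k < c" "c < j" "j < d" for c d
        using D'_cross[OF ij that(1)] that kprop by auto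
      have c2: "False" if "(a,b) \<in> D'" "a < k" "k < b" "b < j" for a b
      proof -
        consider "a < i" | "a = i" | "i < a" by arith
        then show False
        proof cases
          case 1 then show ?thesis using D'_cross[OF that(1) ij] that kprop by auto
        next
          case 2 then show ?thesis using kmax[of b] that by auto
        next
          case 3 then show ?thesis using D'_cross[OF kB[of a] that(1)] that by auto
        qed
      qed
      show False using ab cd x c1 c2 D'_cross unfolding S_def by blast
    qed
  qed
  moreover have "card S = n - 1" unfolding S_def using card_D' kj n3 finD D'_def by simp
  ultimately show False using n3 by simp
qed

end


definition contig :: "'b set list \<Rightarrow> bool" where
  "contig Bs \<longleftrightarrow> (\<forall>v i j k. i \<le> j \<and> j \<le> k \<and> k < length Bs \<and> v \<in> Bs!i \<and> v \<in> Bs!k \<longrightarrow> v \<in> Bs!j)"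

lemma contigD: "contig Bs \<Longrightarrow> i \<le> j \<Longrightarrow> j \<le> k \<Longrightarrow> k < length Bs \<Longrightarrow> v \<in> Bs!i \<Longrightarrow> v \<in> Bs!k \<Longrightarrow> v \<in> Bs!j"
  unfolding contig_def by blast

lemma contig_single: "contig [X]" unfolding contig_def by auto

lemma contig_rev: assumes "contig Bs" shows "contig (rev Bs)"
  unfolding contig_def
proof (intro allI impI)
  fix v i j k assume a: "i \<le> j \<and> j \<le> k \<and> k < length (rev Bs) \<and> v \<in> rev Bs ! i \<and> v \<in> rev Bs ! k"
  let ?L = "length Bs"
  have "v \<in> Bs ! (?L - 1 - k)" "v \<in> Bs ! (?L - 1 - i)" using a by (auto simp: rev_nth)
  moreover have "?L - 1 - k \<le> ?L - 1 - j" "?L - 1 - j \<le> ?L - 1 - i" "?L - 1 - i < ?L" using a by auto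
  ultimately have "v \<in> Bs ! (?L - 1 - j)" using contigD[OF assms] by blast
  then show "v \<in> rev Bs ! j" using a by (auto simp: rev_nth)
qed

lemma contig_append:
  assumes "contig L1" "contig L2" "L1 \<noteq> []" "L2 \<noteq> []"
    "\<And>v. (\<exists>B\<in>set L1. v\<in>B) \<Longrightarrow> (\<exists>B\<in>set L2. v\<in>B) \<Longrightarrow> v \<in> last L1 \<and> v \<in> hd L2"
  shows "contig (L1 @ L2)"
  unfolding contig_def
proof (intro allI impI)
  fix v i j k assume a: "i \<le> j \<and> j \<le> k \<and> k < length (L1 @ L2) \<and> v \<in> (L1 @ L2) ! i \<and> v \<in> (L1 @ L2) ! k"
  let ?a = "length L1"
  show "v \<in> (L1 @ L2) ! j"
  proof (cases "k < ?a")
    case True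
    then have "v \<in> L1 ! i" "v \<in> L1 ! k" "j < ?a" using a by (auto simp: nth_append)
    then have "v \<in> L1 ! j" using contigD[OF assms(1)] a True by blast
    then show ?thesis using \<open>j < ?a\<close> by (auto simp: nth_append)
  next
    case kF: False
    show ?thesis
    proof (cases "i < ?a")
      case False
      then have "v \<in> L2 ! (i - ?a)" "v \<in> L2 ! (k - ?a)" using a kF by (auto simp: nth_append)
      moreover have "i - ?a \<le> j - ?a" "j - ?a \<le> k - ?a" "k - ?a < length L2" using a kF by auto
      ultimately have "v \<in> L2 ! (j - ?a)" using contigD[OF assms(2)] by blast
      then show ?thesis using a False by (auto simp: nth_append)
    next
      case True
      have v1: "v \<in> L1 ! i" using a True by (auto simp: nth_append)
      have v2: "v \<in> L2 ! (k - ?a)" using a kF by (auto simp: nth_append)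
      have k2: "k - ?a < length L2" using a kF by auto
      have "v \<in> last L1 \<and> v \<in> hd L2"
        using assms(5)[of v] v1 v2 True k2 nth_mem by blast
      then have l1: "v \<in> L1 ! (?a - 1)" and h2: "v \<in> L2 ! 0"
        using assms(3,4) by (auto simp: last_conv_nth hd_conv_nth)
      show ?thesis
      proof (cases "j < ?a")
        case True
        have "i \<le> j" "j \<le> ?a - 1" "?a - 1 < ?a" using a True by auto
        then have "v \<in> L1 ! j" using contigD[OF assms(1)] v1 l1 by blast
        then show ?thesis using True by (auto simp: nth_append)
      next
        case False
        have "0 \<le> j - ?a" "j - ?a \<le> k - ?a" using a by auto
        then have "v \<in> L2 ! (j - ?a)" using contigD[OF assms(2)] v2 h2 k2 by blast
        then show ?thesis using False by (auto simp: nth_append)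
      qed
    qed
  qed
qed

lemma contig_cons:
  assumes "contig Bs" "Bs \<noteq> []" "\<And>v. v \<in> X \<Longrightarrow> (\<exists>B\<in>set Bs. v\<in>B) \<Longrightarrow> v \<in> hd Bs"
  shows "contig (X # Bs)"
  using contig_append[OF contig_single assms(1) _ assms(2), of X] assms(3) by auto

lemma card3: "card {a,b,c::'b} \<le> 3"
  by (simp add: card_insert_if)



context tri begin

definition noBad where "noBad \<longleftrightarrow> (\<forall>a b c w. a<b \<and> b<c \<and> (a,b)\<in>D \<and> (b,c)\<in>D \<and> (a,c)\<in>D \<and> w<n \<and> (w<a \<or> c<w) \<and> ed w a \<and> ed w c \<longrightarrow> False)"

definition splitP where "splitP l r \<longleftrightarrow> (\<exists>m. l<m \<and> m\<le>r \<and> (\<forall>i j. (i,j)\<in>D \<and> l\<le>i \<and> j\<le>r \<longrightarrow> i<m \<and> m\<le>j))"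

definition decP where "decP l r \<longleftrightarrow> (\<exists>Bs. Bs \<noteq> [] \<and> (\<forall>B\<in>set Bs. B \<subseteq> {l..r} \<and> card B \<le> 3) \<and> l \<in> hd Bs \<and> r \<in> hd Bs \<and>
   (\<forall>i j. l \<le> i \<and> i<j \<and> j \<le> r \<and> ed i j \<longrightarrow> (\<exists>B\<in>set Bs. i\<in>B \<and> j\<in>B)) \<and> contig Bs)"

lemma SD:
  assumes nb: noBad and lr: "l<r" "r<n"
    and cond: "r = Suc l \<or> ((l,r)\<in>D \<and> (\<exists>w<n. (w<l \<or> r<w) \<and> ed w l \<and> ed w r))"
  shows "splitP l r \<and> decP l r"
  using lr cond
proof (induction "r-l" arbitrary: l r rule: less_induct)
  case less
  show ?case
  proof (cases "r = Suc l")
    case True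
    have "splitP l r" unfolding splitP_def
      by (rule exI[of _ r]) (use True less.prems D_mem in fastforce)
    moreover have "decP l r" unfolding decP_def
    proof (rule exI[of _ "[{l,r}]"], intro conjI)
      show "\<forall>i j. l \<le> i \<and> i < j \<and> j \<le> r \<and> ed i j \<longrightarrow> (\<exists>B\<in>set [{l, r}]. i \<in> B \<and> j \<in> B)"
        using True by auto
      show "\<forall>B\<in>set [{l, r}]. B \<subseteq> {l..r} \<and> card B \<le> 3" using less.prems by (auto simp: card_insert_if)
    qed (auto simp: contig_single)
    ultimately show ?thesis by simp
  next
    case False
    then have lrD: "(l,r) \<in> D" and "\<exists>w<n. (w<l \<or> r<w) \<and> ed w l \<and> ed w r" using less.prems by auto
    then obtain w where w: "w<n" "w<l \<or> r<w" "ed w l" "ed w r" by blast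
    have lrD': "(l,r) \<in> D'" using lrD D'_def by auto
    obtain k where k: "l < k" "k < r" "ed l k" "ed k r" using T1[OF lrD'] by blast
    have "k < n - 1" using k less.prems by auto
    then have hlk: "k = Suc l \<or> (l,k) \<in> D" using ed_iff_lt[of l k] k by auto
    have hkr: "r = Suc k \<or> (k,r) \<in> D" using ed_iff_lt[of k r] k less.prems by auto
    have notboth: "\<not> ((l,k) \<in> D \<and> (k,r) \<in> D)"
      using nb w k lrD unfolding noBad_def by blast
    have lr2: "\<not> (l = 0 \<and> r = n-1)" using D_mem[OF lrD] by auto
    have bag: "\<forall>B\<in>set [{l,k,r}]. B \<subseteq> {l..r} \<and> card B \<le> 3" using k card3 by auto
    show ?thesis
    proof (cases "k = Suc l")
      case True
      have "splitP k r \<and> decP k r"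
      proof (rule less.hyps)
        show "r - k < r - l" using k by auto
        show "k < r" "r < n" using k less.prems by auto
        show "r = Suc k \<or> (k, r) \<in> D \<and> (\<exists>w<n. (w < k \<or> r < w) \<and> ed w k \<and> ed w r)"
        proof -
          have "\<exists>w<n. (w<k \<or> r<w) \<and> ed w k \<and> ed w r"
            by (rule exI[of _ l]) (use k ed_D[OF lrD] less.prems in auto)
          then show ?thesis using hkr by blast
        qed
      qed
      then have sp: "splitP k r" and dp: "decP k r" by auto
      obtain m where m: "k<m" "m\<le>r" "\<And>i j. (i,j)\<in>D \<Longrightarrow> k\<le>i \<Longrightarrow> j\<le>r \<Longrightarrow> i<m \<and> m\<le>j"
        using sp unfolding splitP_def by blast
      obtain Bs where Bs: "Bs \<noteq> []" "\<forall>B\<in>set Bs. B \<subseteq> {k..r} \<and> card B \<le> 3" "k \<in> hd Bs" "r \<in> hd Bs"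
           "\<forall>i j. k \<le> i \<and> i<j \<and> j \<le> r \<and> ed i j \<longrightarrow> (\<exists>B\<in>set Bs. i\<in>B \<and> j\<in>B)" "contig Bs"
        using dp unfolding decP_def by blast
      have lj: "j = r" if "(l,j) \<in> D" "j \<le> r" for j
      proof (rule ccontr)
        assume "j \<noteq> r"
        then have "j < r" "k < j" using that D_mem[OF that(1)] True by auto
        then have "(k,r) \<in> D" using hkr by auto
        then show False using D_cross[OF that(1)] \<open>j<r\<close> \<open>k<j\<close> k by auto
      qed
      have "\<forall>i j. (i, j) \<in> D \<and> l \<le> i \<and> j \<le> r \<longrightarrow> i < m \<and> m \<le> j"
      proof (intro allI impI)
        fix i j assume a: "(i, j) \<in> D \<and> l \<le> i \<and> j \<le> r"
        show "i < m \<and> m \<le> j"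
        proof (cases "i = l")
          case True then show ?thesis using lj[of j] a m k by auto
        next
          case False then show ?thesis using m(3)[of i j] a True by auto
        qed
      qed
      then have "splitP l r" unfolding splitP_def by (intro exI[of _ m]) (use m k in auto)
      moreover have "decP l r" unfolding decP_def
      proof (rule exI[of _ "{l,k,r} # Bs"], intro conjI)
        show "\<forall>B\<in>set ({l, k, r} # Bs). B \<subseteq> {l..r} \<and> card B \<le> 3"
        proof
          fix B assume "B \<in> set ({l, k, r} # Bs)"
          then consider "B = {l,k,r}" | "B \<in> set Bs" by auto
          then show "B \<subseteq> {l..r} \<and> card B \<le> 3"
          proof cases
            case 1 then show ?thesis using bag by auto
          next
            case 2
            then have "B \<subseteq> {k..r}" "card B \<le> 3" using Bs(2) by auto
            moreover have "{k..r} \<subseteq> {l..r}" using k by auto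
            ultimately show ?thesis by auto
          qed
        qed
        show "contig ({l, k, r} # Bs)"
        proof (rule contig_cons)
          have xnot: "l \<notin> B" if "B \<in> set Bs" for B
          proof
            assume "l \<in> B" then have "l \<in> {k..r}" using Bs(2) that by blast
            then show False using k by auto
          qed
          fix v assume "v \<in> {l,k,r}" "\<exists>B\<in>set Bs. v \<in> B"
          then show "v \<in> hd Bs" using xnot Bs by auto
        qed (use Bs in auto)
        show "\<forall>i j. l \<le> i \<and> i < j \<and> j \<le> r \<and> ed i j \<longrightarrow> (\<exists>B\<in>set ({l, k, r} # Bs). i \<in> B \<and> j \<in> B)"
        proof (intro allI impI)
          fix i j assume a: "l \<le> i \<and> i < j \<and> j \<le> r \<and> ed i j"
          show "\<exists>B\<in>set ({l, k, r} # Bs). i \<in> B \<and> j \<in> B"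
          proof (cases "i = l")
            case True
            have "\<not>(l = 0 \<and> j = n-1)" using lr2 a less.prems by auto
            then have "j = Suc l \<or> (l,j) \<in> D" using ed_iff_lt[of l j] a True less.prems by auto
            then have "j = k \<or> j = r" using lj a \<open>k = Suc l\<close> by auto
            then show ?thesis using True by auto
          next
            case False then show ?thesis using Bs(5) a \<open>k = Suc l\<close> by auto
          qed
        qed
      qed auto
      ultimately show ?thesis by simp
    next
      case False
      then have lkD: "(l,k) \<in> D" and rk: "r = Suc k" using hlk hkr notboth by auto
      have "splitP l k \<and> decP l k"
      proof (rule less.hyps)
        show "k - l < r - l" using k by auto
        show "l < k" "k < n" using k less.prems by auto
        show "k = Suc l \<or> (l, k) \<in> D \<and> (\<exists>w<n. (w < l \<or> k < w) \<and> ed w l \<and> ed w k)"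
        proof -
          have "\<exists>w<n. (w<l \<or> k<w) \<and> ed w l \<and> ed w k"
            by (rule exI[of _ r]) (use k ed_D[OF lrD] less.prems ed_sym in auto)
          then show ?thesis using lkD by blast
        qed
      qed
      then have sp: "splitP l k" and dp: "decP l k" by auto
      obtain m where m: "l<m" "m\<le>k" "\<And>i j. (i,j)\<in>D \<Longrightarrow> l\<le>i \<Longrightarrow> j\<le>k \<Longrightarrow> i<m \<and> m\<le>j"
        using sp unfolding splitP_def by blast
      obtain Bs where Bs: "Bs \<noteq> []" "\<forall>B\<in>set Bs. B \<subseteq> {l..k} \<and> card B \<le> 3" "l \<in> hd Bs" "k \<in> hd Bs"
           "\<forall>i j. l \<le> i \<and> i<j \<and> j \<le> k \<and> ed i j \<longrightarrow> (\<exists>B\<in>set Bs. i\<in>B \<and> j\<in>B)" "contig Bs"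
        using dp unfolding decP_def by blast
      have ir: "i = l" if "(i,r) \<in> D" "l \<le> i" for i
      proof (rule ccontr)
        assume "i \<noteq> l"
        then have "l < i" "i < k" using that D_mem[OF that(1)] rk by auto
        then show False using D_cross[OF lkD that(1)] k by auto
      qed
      have "\<forall>i j. (i, j) \<in> D \<and> l \<le> i \<and> j \<le> r \<longrightarrow> i < m \<and> m \<le> j"
      proof (intro allI impI)
        fix i j assume a: "(i, j) \<in> D \<and> l \<le> i \<and> j \<le> r"
        show "i < m \<and> m \<le> j"
        proof (cases "j = r")
          case True then show ?thesis using ir[of i] a m k by auto
        next
          case False then show ?thesis using m(3)[of i j] a rk by auto
        qed
      qed
      then have "splitP l r" unfolding splitP_def by (intro exI[of _ m]) (use m k in auto)
      moreover have "decP l r" unfolding decP_def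
      proof (rule exI[of _ "{l,k,r} # Bs"], intro conjI)
        show "\<forall>B\<in>set ({l, k, r} # Bs). B \<subseteq> {l..r} \<and> card B \<le> 3"
        proof
          fix B assume "B \<in> set ({l, k, r} # Bs)"
          then consider "B = {l,k,r}" | "B \<in> set Bs" by auto
          then show "B \<subseteq> {l..r} \<and> card B \<le> 3"
          proof cases
            case 1 then show ?thesis using bag by auto
          next
            case 2
            then have "B \<subseteq> {l..k}" "card B \<le> 3" using Bs(2) by auto
            moreover have "{l..k} \<subseteq> {l..r}" using k by auto
            ultimately show ?thesis by auto
          qed
        qed
        show "contig ({l, k, r} # Bs)"
        proof (rule contig_cons)
          have xnot: "r \<notin> B" if "B \<in> set Bs" for B
          proof
            assume "r \<in> B" then have "r \<in> {l..k}" using Bs(2) that by blast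
            then show False using k by auto
          qed
          fix v assume "v \<in> {l,k,r}" "\<exists>B\<in>set Bs. v \<in> B"
          then show "v \<in> hd Bs" using xnot Bs by auto
        qed (use Bs in auto)
        show "\<forall>i j. l \<le> i \<and> i < j \<and> j \<le> r \<and> ed i j \<longrightarrow> (\<exists>B\<in>set ({l, k, r} # Bs). i \<in> B \<and> j \<in> B)"
        proof (intro allI impI)
          fix i j assume a: "l \<le> i \<and> i < j \<and> j \<le> r \<and> ed i j"
          show "\<exists>B\<in>set ({l, k, r} # Bs). i \<in> B \<and> j \<in> B"
          proof (cases "j = r")
            case True
            have "\<not>(i = 0 \<and> r = n-1)" using lr2 a less.prems by auto
            then have "r = Suc i \<or> (i,r) \<in> D" using ed_iff_lt[of i r] a True less.prems by auto
            then have "i = k \<or> i = l" using ir a rk by auto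
            then show ?thesis using True by auto
          next
            case False then show ?thesis using Bs(5) a rk by auto
          qed
        qed
      qed auto
      ultimately show ?thesis by simp
    qed
  qed
qed

end


context tri begin

definition splitTop where "splitTop \<longleftrightarrow> (\<exists>p q. p<q \<and> q<n \<and> (\<forall>i j. (i,j)\<in>D \<longrightarrow> ((p\<le>i \<and> i<q) \<longleftrightarrow> \<not>(p\<le>j \<and> j<q))))"

definition decTop where "decTop \<longleftrightarrow> (\<exists>Bs. (\<forall>B\<in>set Bs. B \<subseteq> {..<n} \<and> card B \<le> 3) \<and>
    (\<forall>i j. i<j \<and> j<n \<and> ed i j \<longrightarrow> (\<exists>B\<in>set Bs. i\<in>B \<and> j\<in>B)) \<and> contig Bs)"

lemma TOP: assumes nb: noBad shows "splitTop \<and> decTop"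
proof -
  have D'0: "(0,n-1) \<in> D'" unfolding D'_def by auto
  obtain k where k: "0 < k" "k < n-1" "ed 0 k" "ed k (n-1)" using T1[OF D'0] by blast
  have h0k: "k = Suc 0 \<or> (0,k) \<in> D" using ed_iff_lt[of 0 k] k by auto
  have hkn: "n-1 = Suc k \<or> (k,n-1) \<in> D" using ed_iff_lt[of k "n-1"] k n3 by auto
  have e1: "ed (n-1) 0" "ed (n-1) k" using ed_0 k ed_sym by auto
  have "splitP 0 k \<and> decP 0 k"
  proof (rule SD[OF nb])
    show "0 < k" "k < n" using k by auto
    have "\<exists>w<n. (w < 0 \<or> k < w) \<and> ed w 0 \<and> ed w k"
      by (rule exI[of _ "n-1"]) (use e1 k n3 in auto)
    then show "k = Suc 0 \<or> (0, k) \<in> D \<and> (\<exists>w<n. (w < 0 \<or> k < w) \<and> ed w 0 \<and> ed w k)"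
      using h0k by blast
  qed
  then have sp1: "splitP 0 k" and dp1: "decP 0 k" by auto
  have "splitP k (n-1) \<and> decP k (n-1)"
  proof (rule SD[OF nb])
    show "k < n-1" "n-1 < n" using k n3 by auto
    have "\<exists>w<n. (w < k \<or> n-1 < w) \<and> ed w k \<and> ed w (n-1)"
      by (rule exI[of _ 0]) (use k ed_0 n3 in auto)
    then show "n-1 = Suc k \<or> (k, n-1) \<in> D \<and> (\<exists>w<n. (w < k \<or> n-1 < w) \<and> ed w k \<and> ed w (n-1))"
      using hkn by blast
  qed
  then have sp2: "splitP k (n-1)" and dp2: "decP k (n-1)" by auto
  obtain m1 where m1: "0<m1" "m1\<le>k" "\<And>i j. (i,j)\<in>D \<Longrightarrow> j\<le>k \<Longrightarrow> i<m1 \<and> m1\<le>j"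
    using sp1 unfolding splitP_def by auto
  obtain m2 where m2: "k<m2" "m2\<le>n-1" "\<And>i j. (i,j)\<in>D \<Longrightarrow> k\<le>i \<Longrightarrow> i<m2 \<and> m2\<le>j"
    using sp2 D_mem unfolding splitP_def by fastforce
  obtain Bs1 where Bs1: "Bs1 \<noteq> []" "\<forall>B\<in>set Bs1. B \<subseteq> {0..k} \<and> card B \<le> 3" "0 \<in> hd Bs1" "k \<in> hd Bs1"
           "\<forall>i j. 0 \<le> i \<and> i<j \<and> j \<le> k \<and> ed i j \<longrightarrow> (\<exists>B\<in>set Bs1. i\<in>B \<and> j\<in>B)" "contig Bs1"
    using dp1 unfolding decP_def by blast
  obtain Bs2 where Bs2: "Bs2 \<noteq> []" "\<forall>B\<in>set Bs2. B \<subseteq> {k..n-1} \<and> card B \<le> 3" "k \<in> hd Bs2" "n-1 \<in> hd Bs2"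
           "\<forall>i j. k \<le> i \<and> i<j \<and> j \<le> n-1 \<and> ed i j \<longrightarrow> (\<exists>B\<in>set Bs2. i\<in>B \<and> j\<in>B)" "contig Bs2"
    using dp2 unfolding decP_def by blast
  have nostr: "\<not> (i<k \<and> k<j)" if ij: "(i,j) \<in> D" for i j
  proof
    assume a: "i<k \<and> k<j"
    show False
    proof (cases "i = 0")
      case False
      then have "(0,k) \<in> D" using h0k a by auto
      then show False using D_cross[OF _ ij, of 0] a False by auto
    next
      case True
      then have "j < n-1" using D_mem[OF ij] by auto
      then have "(k,n-1) \<in> D" using hkn a by auto
      then show False using D_cross[OF ij[unfolded True]] a \<open>j < n-1\<close> k by auto
    qed
  qed
  have sides: "j \<le> k \<or> k \<le> i" if "(i,j) \<in> D" for i j using nostr[OF that] by auto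
  have "splitTop"
  proof (cases "(0,k) \<in> D")
    case True
    note c0k = True
    show ?thesis
    proof (cases "(k,n-1) \<in> D")
      case True
      show ?thesis unfolding splitTop_def
      proof (rule exI[of _ m1], rule exI[of _ m2], intro conjI allI impI)
        fix i j assume ij: "(i,j) \<in> D"
        show "(m1 \<le> i \<and> i < m2) = (\<not> (m1 \<le> j \<and> j < m2))"
          using sides[OF ij] m1(3)[OF ij] m2(3)[OF ij] D_mem[OF ij] m1 m2 by auto
      qed (use m1 m2 in auto)
    next
      case False
      then have nk: "n-1 = Suc k" using hkn by auto
      show ?thesis unfolding splitTop_def
      proof (rule exI[of _ 0], rule exI[of _ m1], intro conjI allI impI)
        fix i j assume ij: "(i,j) \<in> D"
        show "(0 \<le> i \<and> i < m1) = (\<not> (0 \<le> j \<and> j < m1))"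
          using sides[OF ij] m1(3)[OF ij] D_mem[OF ij] m1 nk by auto
      qed (use m1 k in auto)
    qed
  next
    case False
    then have k1: "k = 1" using h0k by auto
    show ?thesis unfolding splitTop_def
    proof (rule exI[of _ 0], rule exI[of _ m2], intro conjI allI impI)
      fix i j assume ij: "(i,j) \<in> D"
      show "(0 \<le> i \<and> i < m2) = (\<not> (0 \<le> j \<and> j < m2))"
        using sides[OF ij] m2(3)[OF ij] D_mem[OF ij] m2 k1 by auto
    qed (use m2 k n3 in auto)
  qed
  moreover have "decTop" unfolding decTop_def
  proof (rule exI[of _ "rev Bs1 @ ({0,k,n-1} # Bs2)"], intro conjI)
    show "\<forall>B\<in>set (rev Bs1 @ {0, k, n - 1} # Bs2). B \<subseteq> {..<n} \<and> card B \<le> 3"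
    proof
      fix B assume "B \<in> set (rev Bs1 @ {0, k, n - 1} # Bs2)"
      then consider "B \<in> set Bs1" | "B = {0,k,n-1}" | "B \<in> set Bs2" by auto
      then show "B \<subseteq> {..<n} \<and> card B \<le> 3"
      proof cases
        case 1
        then have "B \<subseteq> {0..k}" "card B \<le> 3" using Bs1(2) by auto
        moreover have "{0..k} \<subseteq> {..<n}" using k by auto
        ultimately show ?thesis by auto
      next
        case 2 then show ?thesis using k card3 by auto
      next
        case 3
        then have "B \<subseteq> {k..n-1}" "card B \<le> 3" using Bs2(2) by auto
        moreover have "{k..n-1} \<subseteq> {..<n}" using k by auto
        ultimately show ?thesis by auto
      qed
    qed
    show "\<forall>i j. i < j \<and> j < n \<and> ed i j \<longrightarrow> (\<exists>B\<in>set (rev Bs1 @ {0, k, n - 1} # Bs2). i \<in> B \<and> j \<in> B)"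
    proof (intro allI impI)
      fix i j assume a: "i < j \<and> j < n \<and> ed i j"
      consider "j \<le> k" | "k \<le> i" | "i < k \<and> k < j" by arith
      then show "\<exists>B\<in>set (rev Bs1 @ {0, k, n - 1} # Bs2). i \<in> B \<and> j \<in> B"
      proof cases
        case 1 then show ?thesis using Bs1(5) a by fastforce
      next
        case 2 then show ?thesis using Bs2(5) a by fastforce
      next
        case 3
        then have "(i,j) \<in> D'" using ed_iff[of i j] a by auto
        then have "(i,j) = (0,n-1)" using nostr 3 unfolding D'_def by auto
        then show ?thesis by auto
      qed
    qed
    show "contig (rev Bs1 @ {0, k, n - 1} # Bs2)"
    proof (rule contig_append)
      show "contig (rev Bs1)" using contig_rev Bs1(6) by auto
      show "rev Bs1 \<noteq> []" "{0, k, n - 1} # Bs2 \<noteq> []" using Bs1 by auto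
      show "contig ({0, k, n - 1} # Bs2)"
      proof (rule contig_cons)
        have xnot: "0 \<notin> B" if "B \<in> set Bs2" for B
        proof
          assume "0 \<in> B" then have "0 \<in> {k..n-1}" using Bs2(2) that by blast
          then show False using k by auto
        qed
        fix v assume "v \<in> {0,k,n-1}" "\<exists>B\<in>set Bs2. v \<in> B"
        then show "v \<in> hd Bs2" using xnot Bs2 by auto
      qed (use Bs2 in auto)
      fix v assume v1: "\<exists>B\<in>set (rev Bs1). v \<in> B" and v2: "\<exists>B\<in>set ({0, k, n - 1} # Bs2). v \<in> B"
      obtain B1 where "B1 \<in> set Bs1" "v \<in> B1" using v1 by auto
      then have "v \<in> {0..k}" using Bs1(2) by blast
      moreover have "v \<in> {0,k,n-1} \<or> v \<in> {k..n-1}"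
      proof -
        obtain B2 where "B2 \<in> set ({0, k, n - 1} # Bs2)" "v \<in> B2" using v2 by auto
        then show ?thesis using Bs2(2) by (metis set_ConsD subsetD)
      qed
      ultimately have "v = 0 \<or> v = k" using k by auto
      then show "v \<in> last (rev Bs1) \<and> v \<in> hd ({0, k, n - 1} # Bs2)"
        using Bs1 by (auto simp: last_rev)
    qed
  qed
  ultimately show ?thesis by simp
qed

end


lemma window_le:
  fixes a b s n :: nat
  assumes "a \<le> b" "a mod n = b mod n" "s \<le> a" "b < s + n"
  shows "a = b"
proof -
  have "b mod n = a mod n" using assms(2) by simp
  then have "n dvd b - a" using mod_eq_dvd_iff_nat[OF assms(1)] by blast
  moreover have "b - a < n" using assms by auto
  ultimately have "b - a = 0" by (metis dvd_imp_le not_less neq0_conv)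
  then show "a = b" using assms(1) by auto
qed

lemma window_eq:
  fixes a b s n :: nat
  assumes "a mod n = b mod n" "s \<le> a" "s \<le> b" "a < s + n" "b < s + n"
  shows "a = b"
proof (cases "a \<le> b")
  case True then show ?thesis using window_le[of a b n s] assms by auto
next
  case False then show ?thesis using window_le[of b a n s] assms by auto
qed

locale gtri = tri +
  fixes V :: "'a set" and E :: "'a set set" and f :: "nat \<Rightarrow> 'a"
  assumes bij: "bij_betw f {..<n} V"
    and Edef: "E = {{f i, f (Suc i mod n)} | i. i < n} \<union> (\<lambda>(i, j). {f i, f j}) ` D"
begin

lemma f_inj: "i < n \<Longrightarrow> j < n \<Longrightarrow> f i = f j \<Longrightarrow> i = j"
  using bij unfolding bij_betw_def inj_on_def by auto

lemma f_V: "i < n \<Longrightarrow> f i \<in> V" using bij unfolding bij_betw_def by auto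

lemma V_f: "v \<in> V \<Longrightarrow> \<exists>i<n. v = f i" using bij unfolding bij_betw_def by auto

lemma ed_irrefl: assumes "i < n" shows "\<not> ed i i"
proof
  assume "ed i i"
  then consider "i = Suc i mod n" | "(i,i) \<in> D" unfolding ed_def by blast
  then show False
  proof cases
    case 1
    show False
    proof (cases "Suc i < n")
      case True then show False using 1 by auto
    next
      case False then have "Suc i = n" using assms by auto
      then show False using 1 n3 by auto
    qed
  next
    case 2 then show False using D_mem by blast
  qed
qed

lemma pair_eq: "i < n \<Longrightarrow> j < n \<Longrightarrow> a < n \<Longrightarrow> b < n \<Longrightarrow> {f i, f j} = {f a, f b} \<Longrightarrow>
   (i = a \<and> j = b) \<or> (i = b \<and> j = a)"
proof -
  assume a: "i < n" "j < n" "a < n" "b < n" "{f i, f j} = {f a, f b}"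
  then have "(f i = f a \<and> f j = f b) \<or> (f i = f b \<and> f j = f a)" by (simp add: doubleton_eq_iff)
  then show ?thesis using f_inj a by blast
qed

lemma edgeE: assumes "e \<in> E" shows "\<exists>i j. i < n \<and> j < n \<and> e = {f i, f j} \<and> ed i j"
proof -
  from assms consider (c) i where "i < n" "e = {f i, f (Suc i mod n)}" | (d) i j where "(i,j) \<in> D" "e = {f i, f j}"
    unfolding Edef by auto
  then show ?thesis
  proof cases
    case c then show ?thesis using ed_cyc[of i] n3 by (intro exI[of _ i] exI[of _ "Suc i mod n"]) auto
  next
    case d then show ?thesis using D_mem[OF d(1)] ed_D[OF d(1)] by (intro exI[of _ i] exI[of _ j]) auto
  qed
qed

lemma E_iff: assumes "i < n" "j < n" shows "{f i, f j} \<in> E \<longleftrightarrow> ed i j"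
proof
  assume "{f i, f j} \<in> E"
  then obtain a b where ab: "a < n" "b < n" "{f i, f j} = {f a, f b}" "ed a b" using edgeE by blast
  then show "ed i j" using pair_eq[OF assms ab(1,2,3)] ed_sym by auto
next
  assume e: "ed i j"
  then consider "j = Suc i mod n" | "i = Suc j mod n" | "(i,j) \<in> D" | "(j,i) \<in> D" unfolding ed_def by blast
  then show "{f i, f j} \<in> E"
  proof cases
    case 1 then show ?thesis unfolding Edef using assms by auto
  next
    case 2 then have "{f i, f j} = {f j, f (Suc j mod n)}" by auto
    then show ?thesis unfolding Edef using assms by auto
  next
    case 3 then show ?thesis unfolding Edef by force
  next
    case 4 then have "{f i, f j} = (\<lambda>(i, j). {f i, f j}) (j,i)" by auto
    then show ?thesis unfolding Edef using 4 by blast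
  qed
qed

lemma pd_exists: assumes nb: noBad
  shows "\<exists>Bs. path_decomposition V E Bs \<and> (\<forall>B\<in>set Bs. card B \<le> 3)"
proof -
  obtain Bs where Bs: "\<forall>B\<in>set Bs. B \<subseteq> {..<n} \<and> card B \<le> 3"
    "\<forall>i j. i<j \<and> j<n \<and> ed i j \<longrightarrow> (\<exists>B\<in>set Bs. i\<in>B \<and> j\<in>B)" "contig Bs"
    using TOP[OF nb] unfolding decTop_def by blast
  define Cs where "Cs = map (\<lambda>B. f ` B) Bs"
  have "path_decomposition V E Cs" unfolding path_decomposition_def
  proof (intro conjI)
    show "\<forall>B\<in>set Cs. B \<subseteq> V"
    proof
      fix C assume "C \<in> set Cs"
      then obtain B where B: "B \<in> set Bs" "C = f ` B" unfolding Cs_def by auto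
      then have "B \<subseteq> {..<n}" using Bs(1) by auto
      then show "C \<subseteq> V" using B f_V by auto
    qed
    show "\<forall>e\<in>E. \<exists>B\<in>set Cs. e \<subseteq> B"
    proof
      fix e assume "e \<in> E"
      then obtain i j where ij: "i < n" "j < n" "e = {f i, f j}" "ed i j" using edgeE by blast
      have "i \<noteq> j" using ij ed_irrefl by auto
      then consider "i < j" | "j < i" by arith
      then have "\<exists>B\<in>set Bs. i\<in>B \<and> j\<in>B"
      proof cases
        case 1 then show ?thesis using Bs(2)[rule_format, of i j] ij by blast
      next
        case 2
        have "ed j i" using ij(4) ed_sym by simp
        then show ?thesis using Bs(2)[rule_format, of j i] ij 2 by blast
      qed
      then obtain B where "B \<in> set Bs" "i \<in> B" "j \<in> B" by blast
      then have "f ` B \<in> set Cs" "e \<subseteq> f ` B" using ij unfolding Cs_def by auto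
      then show "\<exists>B\<in>set Cs. e \<subseteq> B" by blast
    qed
    show "\<forall>v i j k. i \<le> j \<and> j \<le> k \<and> k < length Cs \<and> v \<in> Cs ! i \<and> v \<in> Cs ! k \<longrightarrow> v \<in> Cs ! j"
    proof (intro allI impI)
      fix v i j k assume a: "i \<le> j \<and> j \<le> k \<and> k < length Cs \<and> v \<in> Cs ! i \<and> v \<in> Cs ! k"
      then obtain x y where xy: "x \<in> Bs!i" "v = f x" "y \<in> Bs!k" "v = f y" unfolding Cs_def by auto
      have "Bs!i \<in> set Bs" "Bs!k \<in> set Bs" using a unfolding Cs_def by auto
      then have "Bs!i \<subseteq> {..<n}" "Bs!k \<subseteq> {..<n}" using Bs(1) by auto
      then have "x < n" "y < n" using xy by auto
      then have "x = y" using xy f_inj by metis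
      then have "x \<in> Bs!j" using contigD[OF Bs(3)] a xy unfolding Cs_def by auto
      then show "v \<in> Cs ! j" using xy a unfolding Cs_def by auto
    qed
  qed
  moreover have "\<forall>B\<in>set Cs. card B \<le> 3"
  proof
    fix C assume "C \<in> set Cs"
    then obtain B where B: "B \<in> set Bs" "C = f ` B" unfolding Cs_def by auto
    then have "B \<subseteq> {..<n}" "card B \<le> 3" using Bs(1) by auto
    then have "finite B" "card B \<le> 3" using finite_subset by auto
    then show "card C \<le> 3" using B card_image_le le_trans by blast
  qed
  ultimately show ?thesis by blast
qed

lemma arc_path:
  assumes L: "0 < L" "L < n"
    and nod: "\<And>t1 t2. t1 < L \<Longrightarrow> t2 < L \<Longrightarrow> ((s+t1) mod n, (s+t2) mod n) \<notin> D"
  shows "induced_path E (f ` ((\<lambda>t. (s+t) mod n) ` {..<L}))"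
proof -
  define g where "g t = (s+t) mod n" for t
  define xs where "xs = map (\<lambda>t. f (g t)) [0..<L]"
  have npos: "0 < n" using n3 by auto
  have gn: "g t < n" for t unfolding g_def using npos by auto
  have inj: "i = j" if "g i = g j" "i < L" "j < L" for i j
  proof -
    have "s + i = s + j" using window_eq[of "s+i" n "s+j" s] that L unfolding g_def by auto
    then show ?thesis by simp
  qed
  have len: "length xs = L" unfolding xs_def by simp
  have nth: "xs ! i = f (g i)" if "i < L" for i unfolding xs_def using that by simp
  have dist: "distinct xs" unfolding xs_def distinct_map
  proof
    show "inj_on (\<lambda>t. f (g t)) (set [0..<L])"
    proof (rule inj_onI)
      fix x y assume "x \<in> set [0..<L]" "y \<in> set [0..<L]" "f (g x) = f (g y)"
      then have "x < L" "y < L" "g x = g y" using f_inj[OF gn gn] by auto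
      then show "x = y" using inj by blast
    qed
  qed simp
  have st: "set xs = f ` ((\<lambda>t. (s+t) mod n) ` {..<L})" unfolding xs_def g_def
    by (auto simp: image_comp lessThan_atLeast0)
  have adj: "({xs ! i, xs ! j} \<in> E) = (i = Suc j \<or> j = Suc i)" if i': "i < L" and j': "j < L" for i j
  proof -
    have "({xs ! i, xs ! j} \<in> E) = ed (g i) (g j)"
      using nth[OF i'] nth[OF j'] E_iff[OF gn gn] by simp
    also have "\<dots> = (i = Suc j \<or> j = Suc i)"
    proof
      assume e: "ed (g i) (g j)"
      then consider "g j = Suc (g i) mod n" | "g i = Suc (g j) mod n"
        | "(g i, g j) \<in> D" | "(g j, g i) \<in> D" unfolding ed_def by blast
      then show "i = Suc j \<or> j = Suc i"
      proof cases
        case 1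
        then have "(s+j) mod n = (s + Suc i) mod n" unfolding g_def by (simp add: mod_Suc_eq)
        then have "s + j = s + Suc i" using window_eq[of "s+j" n "s + Suc i" s] i' j' L by simp
        then show ?thesis by simp
      next
        case 2
        then have "(s+i) mod n = (s + Suc j) mod n" unfolding g_def by (simp add: mod_Suc_eq)
        then have "s + i = s + Suc j" using window_eq[of "s+i" n "s + Suc j" s] i' j' L by simp
        then show ?thesis by simp
      next
        case 3 then show ?thesis using nod[OF i' j'] unfolding g_def by blast
      next
        case 4 then show ?thesis using nod[OF j' i'] unfolding g_def by blast
      qed
    next
      assume "i = Suc j \<or> j = Suc i"
      then show "ed (g i) (g j)"
      proof
        assume "i = Suc j"
        then have "g i = Suc (g j) mod n" unfolding g_def by (simp add: mod_Suc_eq)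
        then show ?thesis unfolding ed_def by blast
      next
        assume "j = Suc i"
        then have "g j = Suc (g i) mod n" unfolding g_def by (simp add: mod_Suc_eq)
        then show ?thesis unfolding ed_def by blast
      qed
    qed
    finally show ?thesis .
  qed
  show ?thesis unfolding induced_path_def
  proof (rule exI[of _ xs], intro conjI)
    show "xs \<noteq> []" using len L by auto
  qed (use dist st adj len in auto)
qed

lemma paths_exist: assumes nb: noBad
  shows "\<exists>Vu Vv. Vu \<union> Vv = V \<and> Vu \<inter> Vv = {} \<and> induced_path E Vu \<and> induced_path E Vv"
proof -
  obtain p q where pq: "p<q" "q<n" "\<And>i j. (i,j)\<in>D \<Longrightarrow> ((p\<le>i \<and> i<q) \<longleftrightarrow> \<not>(p\<le>j \<and> j<q))"
    using TOP[OF nb] unfolding splitTop_def by blast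
  have A1: "(\<lambda>t. (p+t) mod n) ` {..<q - p} = {p..<q}"
  proof
    show "(\<lambda>t. (p+t) mod n) ` {..<q - p} \<subseteq> {p..<q}"
    proof
      fix x assume "x \<in> (\<lambda>t. (p+t) mod n) ` {..<q - p}"
      then obtain t where t: "t < q - p" "x = (p+t) mod n" by auto
      then have "p + t < n" using pq by auto
      then have "x = p + t" using t by simp
      then show "x \<in> {p..<q}" using t by auto
    qed
    show "{p..<q} \<subseteq> (\<lambda>t. (p+t) mod n) ` {..<q - p}"
    proof
      fix x assume x: "x \<in> {p..<q}"
      then have "x = (p + (x - p)) mod n" "x - p \<in> {..<q - p}" using pq by auto
      then show "x \<in> (\<lambda>t. (p+t) mod n) ` {..<q - p}" by (rule image_eqI)
    qed
  qed
  have A2: "(\<lambda>t. (q+t) mod n) ` {..<n - (q - p)} = {..<n} - {p..<q}"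
  proof
    show "(\<lambda>t. (q+t) mod n) ` {..<n - (q - p)} \<subseteq> {..<n} - {p..<q}"
    proof
      fix x assume "x \<in> (\<lambda>t. (q+t) mod n) ` {..<n - (q - p)}"
      then obtain t where t: "t < n - (q-p)" "x = (q+t) mod n" by auto
      show "x \<in> {..<n} - {p..<q}"
      proof (cases "q + t < n")
        case True
        then have "x = q + t" using t by simp
        then show ?thesis using True by auto
      next
        case False
        then have "x = q + t - n" using t pq by (simp add: le_mod_geq)
        then show ?thesis using t pq False by auto
      qed
    qed
    show "{..<n} - {p..<q} \<subseteq> (\<lambda>t. (q+t) mod n) ` {..<n - (q - p)}"
    proof
      fix x assume x: "x \<in> {..<n} - {p..<q}"
      show "x \<in> (\<lambda>t. (q+t) mod n) ` {..<n - (q - p)}"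
      proof (cases "q \<le> x")
        case True
        then have "x = (q + (x - q)) mod n" "x - q \<in> {..<n - (q - p)}" using x pq by auto
        then show ?thesis by (rule image_eqI)
      next
        case False
        then have xp: "x < p" using x by auto
        have "q + (x + n - q) = x + n" using pq by auto
        then have "x = (q + (x + n - q)) mod n" using x by simp
        moreover have "x + n - q \<in> {..<n - (q - p)}" using xp pq by auto
        ultimately show ?thesis by (rule image_eqI)
      qed
    qed
  qed
  have P1: "induced_path E (f ` ((\<lambda>t. (p+t) mod n) ` {..<q - p}))"
  proof (rule arc_path)
    show "0 < q - p" "q - p < n" using pq by auto
    fix t1 t2 assume t: "t1 < q - p" "t2 < q - p"
    have "(p + t1) mod n \<in> {p..<q}" "(p + t2) mod n \<in> {p..<q}"
      using A1 t by blast+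
    then show "((p + t1) mod n, (p + t2) mod n) \<notin> D" using pq(3)[of "(p + t1) mod n" "(p + t2) mod n"] by auto
  qed
  have P2: "induced_path E (f ` ((\<lambda>t. (q+t) mod n) ` {..<n - (q - p)}))"
  proof (rule arc_path)
    show "0 < n - (q - p)" "n - (q - p) < n" using pq by auto
    fix t1 t2 assume t: "t1 < n - (q - p)" "t2 < n - (q - p)"
    have "(q + t1) mod n \<in> {..<n} - {p..<q}" "(q + t2) mod n \<in> {..<n} - {p..<q}"
      using A2 t by blast+
    then show "((q + t1) mod n, (q + t2) mod n) \<notin> D" using pq(3)[of "(q + t1) mod n" "(q + t2) mod n"] by auto
  qed
  have fim: "f ` {..<n} = V" using bij unfolding bij_betw_def by auto
  have injf: "inj_on f {..<n}" using bij unfolding bij_betw_def by auto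
  show ?thesis
  proof (intro exI conjI)
    show "induced_path E (f ` {p..<q})" using P1 A1 by simp
    show "induced_path E (f ` ({..<n} - {p..<q}))" using P2 A2 by simp
    have "{p..<q} \<union> ({..<n} - {p..<q}) = {..<n}" using pq by auto
    then show "f ` {p..<q} \<union> f ` ({..<n} - {p..<q}) = V" using fim by (metis image_Un)
    have "f ` {p..<q} \<inter> f ` ({..<n} - {p..<q}) = f ` ({p..<q} \<inter> ({..<n} - {p..<q}))"
      by (rule inj_on_image_Int[OF injf, symmetric]) (use pq in auto)
    then show "f ` {p..<q} \<inter> f ` ({..<n} - {p..<q}) = {}" by simp
  qed
qed

end


lemma pd_contig:
  assumes "path_decomposition V E Bs" "i \<le> j" "j \<le> k" "k < length Bs" "v \<in> Bs!i" "v \<in> Bs!k"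
  shows "v \<in> Bs!j"
proof -
  have "\<forall>v i j k. i \<le> j \<and> j \<le> k \<and> k < length Bs \<and> v \<in> Bs!i \<and> v \<in> Bs!k \<longrightarrow> v \<in> Bs!j"
    using assms(1) unfolding path_decomposition_def by (elim conjE)
  then show ?thesis using assms(2-6) by blast
qed

lemma pd_between:
  assumes "path_decomposition V E Bs" "i < length Bs" "k < length Bs"
    "(i \<le> j \<and> j \<le> k) \<or> (k \<le> j \<and> j \<le> i)" "v \<in> Bs!i" "v \<in> Bs!k"
  shows "v \<in> Bs!j"
  using assms(4)
proof
  assume "i \<le> j \<and> j \<le> k" then show ?thesis using pd_contig[OF assms(1), of i j k v] assms by blast
next
  assume "k \<le> j \<and> j \<le> i" then show ?thesis using pd_contig[OF assms(1), of k j i v] assms by blast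
qed

lemma pd_edge:
  assumes "path_decomposition V E Bs" "e \<in> E"
  shows "\<exists>i<length Bs. e \<subseteq> Bs!i"
proof -
  have "\<forall>e\<in>E. \<exists>B\<in>set Bs. e \<subseteq> B" using assms(1) unfolding path_decomposition_def by (elim conjE)
  then obtain B where "B \<in> set Bs" "e \<subseteq> B" using assms(2) by blast
  then obtain i where "i < length Bs" "Bs!i = B" by (auto simp: in_set_conv_nth)
  then show ?thesis using \<open>e \<subseteq> B\<close> by blast
qed

lemma helly:
  assumes pd: "path_decomposition V E Bs" and e: "{a,b} \<in> E" "{b,c} \<in> E" "{a,c} \<in> E"
  shows "\<exists>i<length Bs. a \<in> Bs!i \<and> b \<in> Bs!i \<and> c \<in> Bs!i"
proof -
  obtain i1 where i1: "i1 < length Bs" "{a,b} \<subseteq> Bs!i1" using pd_edge[OF pd e(1)] by blast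
  obtain i2 where i2: "i2 < length Bs" "{b,c} \<subseteq> Bs!i2" using pd_edge[OF pd e(2)] by blast
  obtain i3 where i3: "i3 < length Bs" "{a,c} \<subseteq> Bs!i3" using pd_edge[OF pd e(3)] by blast
  consider "(i1 \<le> i2 \<and> i2 \<le> i3) \<or> (i3 \<le> i2 \<and> i2 \<le> i1)"
    | "(i2 \<le> i1 \<and> i1 \<le> i3) \<or> (i3 \<le> i1 \<and> i1 \<le> i2)"
    | "(i1 \<le> i3 \<and> i3 \<le> i2) \<or> (i2 \<le> i3 \<and> i3 \<le> i1)"
    by (cases "i1 \<le> i2"; cases "i2 \<le> i3"; cases "i1 \<le> i3"; simp)
  then show ?thesis
  proof cases
    case 1
    have "a \<in> Bs!i2" using pd_between[OF pd i1(1) i3(1) 1] i1 i3 by auto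
    then show ?thesis using i2 by auto
  next
    case 2
    have "c \<in> Bs!i1" using pd_between[OF pd i2(1) i3(1) 2] i2 i3 by auto
    then show ?thesis using i1 by auto
  next
    case 3
    have "b \<in> Bs!i3" using pd_between[OF pd i1(1) i2(1) 3] i1 i2 by auto
    then show ?thesis using i3 by auto
  qed
qed

lemma tri_bag:
  assumes pd: "path_decomposition V E Bs" and c3: "\<forall>B\<in>set Bs. card B \<le> 3" and fin: "finite V"
    and e: "{a,b} \<in> E" "{b,c} \<in> E" "{a,c} \<in> E" and d: "a \<noteq> b" "b \<noteq> c" "a \<noteq> c"
  shows "\<exists>i<length Bs. Bs!i = {a,b,c}"
proof -
  obtain i where i: "i < length Bs" "a \<in> Bs!i" "b \<in> Bs!i" "c \<in> Bs!i" using helly[OF pd e] by blast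
  have "Bs!i \<in> set Bs" using i by auto
  moreover have "\<forall>B\<in>set Bs. B \<subseteq> V" using pd unfolding path_decomposition_def by (elim conjE)
  ultimately have sub: "Bs!i \<subseteq> V" "card (Bs!i) \<le> 3" using c3 by auto
  have "finite (Bs!i)" using sub fin finite_subset by auto
  moreover have "{a,b,c} \<subseteq> Bs!i" using i by auto
  moreover have "card (Bs!i) \<le> card {a,b,c}" using d sub(2) by auto
  ultimately have "{a,b,c} = Bs!i" by (rule card_seteq)
  then show ?thesis using i by auto
qed

lemma sun:
  assumes pd: "path_decomposition V E Bs" and c3: "\<forall>B\<in>set Bs. card B \<le> 3" and fin: "finite V"
    and d: "distinct [x,y,z,u,v,w]"
    and e: "{x,y} \<in> E" "{y,z} \<in> E" "{x,z} \<in> E" "{x,u} \<in> E" "{y,u} \<in> E" "{y,v} \<in> E" "{z,v} \<in> E"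
       "{x,w} \<in> E" "{z,w} \<in> E"
  shows False
proof -
  have sw: "{u,x} \<in> E" "{u,y} \<in> E" "{v,y} \<in> E" "{v,z} \<in> E" "{w,x} \<in> E" "{w,z} \<in> E"
    "{y,x} \<in> E" "{z,y} \<in> E" "{z,x} \<in> E"
    using e by (simp_all add: insert_commute)
  obtain i0 where i0: "i0 < length Bs" "Bs!i0 = {x,y,z}" using tri_bag[OF pd c3 fin e(1,2,3)] d by auto
  obtain i1 where i1: "i1 < length Bs" "Bs!i1 = {x,y,u}" using tri_bag[OF pd c3 fin e(1) e(5) e(4)] d by auto
  obtain i2 where i2: "i2 < length Bs" "Bs!i2 = {y,z,v}" using tri_bag[OF pd c3 fin e(2) e(7) e(6)] d by auto
  obtain i3 where i3: "i3 < length Bs" "Bs!i3 = {x,z,w}" using tri_bag[OF pd c3 fin e(3) e(9) e(8)] d by auto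
  have b1: "x \<in> Bs!j \<and> y \<in> Bs!j" if "(i1 \<le> j \<and> j \<le> i0) \<or> (i0 \<le> j \<and> j \<le> i1)" for j
    using pd_between[OF pd i1(1) i0(1) that] i0 i1 by auto
  have b2: "y \<in> Bs!j \<and> z \<in> Bs!j" if "(i2 \<le> j \<and> j \<le> i0) \<or> (i0 \<le> j \<and> j \<le> i2)" for j
    using pd_between[OF pd i2(1) i0(1) that] i0 i2 by auto
  have b3: "x \<in> Bs!j \<and> z \<in> Bs!j" if "(i3 \<le> j \<and> j \<le> i0) \<or> (i0 \<le> j \<and> j \<le> i3)" for j
    using pd_between[OF pd i3(1) i0(1) that] i0 i3 by auto
  have n12: "\<not> ((i1 \<le> i2 \<and> i2 \<le> i0) \<or> (i0 \<le> i2 \<and> i2 \<le> i1))" using b1[of i2] i2 d by auto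
  have n21: "\<not> ((i2 \<le> i1 \<and> i1 \<le> i0) \<or> (i0 \<le> i1 \<and> i1 \<le> i2))" using b2[of i1] i1 d by auto
  have n13: "\<not> ((i1 \<le> i3 \<and> i3 \<le> i0) \<or> (i0 \<le> i3 \<and> i3 \<le> i1))" using b1[of i3] i3 d by auto
  have n31: "\<not> ((i3 \<le> i1 \<and> i1 \<le> i0) \<or> (i0 \<le> i1 \<and> i1 \<le> i3))" using b3[of i1] i1 d by auto
  have n23: "\<not> ((i2 \<le> i3 \<and> i3 \<le> i0) \<or> (i0 \<le> i3 \<and> i3 \<le> i2))" using b2[of i3] i3 d by auto
  have n32: "\<not> ((i3 \<le> i2 \<and> i2 \<le> i0) \<or> (i0 \<le> i2 \<and> i2 \<le> i3))" using b3[of i2] i2 d by auto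
  show False
    by (insert n12 n21 n13 n31 n23 n32, cases "i1 \<le> i0"; cases "i2 \<le> i0"; cases "i3 \<le> i0"; simp)
qed

lemma mono_walk:
  fixes p :: "nat \<Rightarrow> nat"
  assumes "\<forall>t<M. p (Suc t) = Suc (p t) \<or> p t = Suc (p (Suc t))" "inj_on p {..M}"
  shows "(\<forall>t\<le>M. p t = p 0 + t) \<or> (\<forall>t\<le>M. p 0 = p t + t)"
  using assms
proof (induction M)
  case 0 then show ?case by auto
next
  case (Suc M)
  have p1: "\<forall>t<M. p (Suc t) = Suc (p t) \<or> p t = Suc (p (Suc t))" using Suc.prems(1) by auto
  have p2: "inj_on p {..M}" by (rule inj_on_subset[OF Suc.prems(2)]) auto
  have ih: "(\<forall>t\<le>M. p t = p 0 + t) \<or> (\<forall>t\<le>M. p 0 = p t + t)" using Suc.IH[OF p1 p2] .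
  have st: "p (Suc M) = Suc (p M) \<or> p M = Suc (p (Suc M))" using Suc.prems(1) by blast
  have injc: "p a \<noteq> p b" if "a \<le> Suc M" "b \<le> Suc M" "a \<noteq> b" for a b
    using Suc.prems(2) that unfolding inj_on_def by auto
  from ih show ?case
  proof
    assume up: "\<forall>t\<le>M. p t = p 0 + t"
    have upM: "p M = p 0 + M" using up by blast
    from st show ?thesis
    proof
      assume a: "p (Suc M) = Suc (p M)"
      have "\<forall>t\<le>Suc M. p t = p 0 + t"
      proof (intro allI impI)
        fix t assume "t \<le> Suc M"
        then consider "t \<le> M" | "t = Suc M" by linarith
        then show "p t = p 0 + t"
        proof cases
          case 1 then show ?thesis using up by blast
        next
          case 2 then show ?thesis using a upM by simp
        qed
      qed
      then show ?thesis by blast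
    next
      assume a: "p M = Suc (p (Suc M))"
      show ?thesis
      proof (cases M)
        case 0
        have "\<forall>t\<le>Suc M. p 0 = p t + t"
        proof (intro allI impI)
          fix t assume "t \<le> Suc M"
          then consider "t = 0" | "t = 1" using 0 by linarith
          then show "p 0 = p t + t"
          proof cases
            case 1 then show ?thesis by simp
          next
            case 2 then show ?thesis using a 0 by simp
          qed
        qed
        then show ?thesis by blast
      next
        case (Suc M')
        have "M' \<le> M" using Suc by simp
        then have "p M' = p 0 + M'" using up by blast
        then have "p M' = p (Suc M)" using a upM Suc by simp
        then show ?thesis using injc[of M' "Suc M"] Suc by simp
      qed
    qed
  next
    assume down: "\<forall>t\<le>M. p 0 = p t + t"
    have downM: "p 0 = p M + M" using down by blast
    from st show ?thesis
    proof
      assume a: "p M = Suc (p (Suc M))"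
      have "\<forall>t\<le>Suc M. p 0 = p t + t"
      proof (intro allI impI)
        fix t assume "t \<le> Suc M"
        then consider "t \<le> M" | "t = Suc M" by linarith
        then show "p 0 = p t + t"
        proof cases
          case 1 then show ?thesis using down by blast
        next
          case 2 then show ?thesis using a downM by simp
        qed
      qed
      then show ?thesis by blast
    next
      assume a: "p (Suc M) = Suc (p M)"
      show ?thesis
      proof (cases M)
        case 0
        have "\<forall>t\<le>Suc M. p t = p 0 + t"
        proof (intro allI impI)
          fix t assume "t \<le> Suc M"
          then consider "t = 0" | "t = 1" using 0 by linarith
          then show "p t = p 0 + t"
          proof cases
            case 1 then show ?thesis by simp
          next
            case 2 then show ?thesis using a 0 by simp
          qed
        qed
        then show ?thesis by blast
      next
        case (Suc M')
        have "M' \<le> M" using Suc by simp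
        then have "p 0 = p M' + M'" using down by blast
        then have "p M' = p (Suc M)" using a downM Suc by simp
        then show ?thesis using injc[of M' "Suc M"] Suc by simp
      qed
    qed
  qed
qed

lemma ip_cycle:
  assumes ip: "induced_path E S" and M: "2 \<le> M" and injc: "inj_on c {..M}"
    and inS: "\<And>t. t \<le> M \<Longrightarrow> c t \<in> S"
    and ed: "\<And>t. t < M \<Longrightarrow> {c t, c (Suc t)} \<in> E" and cl: "{c 0, c M} \<in> E"
  shows False
proof -
  obtain xs where xs: "xs \<noteq> []" "distinct xs" "set xs = S"
    "\<forall>i<length xs. \<forall>j<length xs. {xs!i, xs!j} \<in> E \<longleftrightarrow> (i = Suc j \<or> j = Suc i)"
    using ip unfolding induced_path_def by blast
  define pos where "pos t = (SOME i. i < length xs \<and> xs!i = c t)" for t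
  have pos: "pos t < length xs \<and> xs!(pos t) = c t" if "t \<le> M" for t
  proof -
    have "c t \<in> set xs" using inS[OF that] xs(3) by simp
    then have "\<exists>i. i < length xs \<and> xs!i = c t" by (simp add: in_set_conv_nth)
    then show ?thesis unfolding pos_def by (rule someI_ex)
  qed
  have step: "\<forall>t<M. pos (Suc t) = Suc (pos t) \<or> pos t = Suc (pos (Suc t))"
  proof (intro allI impI)
    fix t assume t: "t < M"
    have p1: "pos t < length xs" "xs ! pos t = c t" using pos[of t] t by auto
    have p2: "pos (Suc t) < length xs" "xs ! pos (Suc t) = c (Suc t)" using pos[of "Suc t"] t by auto
    have "{xs ! pos t, xs ! pos (Suc t)} \<in> E" using p1 p2 ed[OF t] by simp
    then have "pos t = Suc (pos (Suc t)) \<or> pos (Suc t) = Suc (pos t)"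
      using xs(4)[rule_format, OF p1(1) p2(1)] by simp
    then show "pos (Suc t) = Suc (pos t) \<or> pos t = Suc (pos (Suc t))" by blast
  qed
  have injp: "inj_on pos {..M}"
  proof (rule inj_onI)
    fix a b assume "a \<in> {..M}" "b \<in> {..M}" "pos a = pos b"
    then have "c a = c b" using pos[of a] pos[of b] by auto
    then show "a = b" using injc \<open>a \<in> {..M}\<close> \<open>b \<in> {..M}\<close> unfolding inj_on_def by blast
  qed
  have w: "(\<forall>t\<le>M. pos t = pos 0 + t) \<or> (\<forall>t\<le>M. pos 0 = pos t + t)" using mono_walk[OF step injp] .
  have p1: "pos 0 < length xs" "xs ! pos 0 = c 0" using pos[of 0] by auto
  have p2: "pos M < length xs" "xs ! pos M = c M" using pos[of M] by auto
  have "{xs ! pos 0, xs ! pos M} \<in> E" using p1 p2 cl by simp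
  then have "pos 0 = Suc (pos M) \<or> pos M = Suc (pos 0)" using xs(4)[rule_format, OF p1(1) p2(1)] by simp
  moreover have "pos M = pos 0 + M \<or> pos 0 = pos M + M" using w by blast
  ultimately show False using M by linarith
qed

context gtri begin

lemma finV: "finite V"
proof -
  have "f ` {..<n} = V" using bij unfolding bij_betw_def by auto
  then show ?thesis by auto
qed

lemma noBad_of_pd:
  assumes pd: "path_decomposition V E Bs" and c3: "\<forall>B\<in>set Bs. card B \<le> 3"
  shows noBad
  unfolding noBad_def
proof (intro allI impI)
  fix a b c w assume h: "a < b \<and> b < c \<and> (a, b) \<in> D \<and> (b, c) \<in> D \<and> (a, c) \<in> D \<and> w < n \<and> (w < a \<or> c < w) \<and> ed w a \<and> ed w c"
  have abD': "(a,b) \<in> D'" "(b,c) \<in> D'" using h unfolding D'_def by auto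
  obtain u where u: "a < u" "u < b" "ed a u" "ed u b" using T1[OF abD'(1)] by blast
  obtain v where v: "b < v" "v < c" "ed b v" "ed v c" using T1[OF abD'(2)] by blast
  have cn: "c < n" using h D_mem by blast
  have lt: "a < n" "b < n" "c < n" "u < n" "v < n" "w < n" using h cn u v by auto
  have dd: "distinct [a,b,c,u,v,w]" using h u v by auto
  have injf: "inj_on f {..<n}" using bij unfolding bij_betw_def by auto
  have "set [a,b,c,u,v,w] \<subseteq> {..<n}" using lt by auto
  then have "inj_on f (set [a,b,c,u,v,w])" by (rule inj_on_subset[OF injf])
  then have "distinct (map f [a,b,c,u,v,w])"
    unfolding distinct_map using dd by blast
  then have d: "distinct [f a, f b, f c, f u, f v, f w]" by simp
  have eds: "ed a b" "ed b c" "ed a c" "ed a u" "ed b u" "ed b v" "ed c v" "ed a w" "ed c w"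
    using h u v ed_D ed_sym by auto
  show False
  proof (rule sun[OF pd c3 finV d])
    show "{f a, f b} \<in> E" "{f b, f c} \<in> E" "{f a, f c} \<in> E" "{f a, f u} \<in> E" "{f b, f u} \<in> E"
      "{f b, f v} \<in> E" "{f c, f v} \<in> E" "{f a, f w} \<in> E" "{f c, f w} \<in> E"
      using eds E_iff lt by auto
  qed
qed

end


context gtri begin

lemma side_step:
  assumes xy: "(x,y) \<in> D" and uv: "u < n" "v < n" "ed u v" and nx: "v \<noteq> x" "v \<noteq> y"
    and s: "x < u" "u < y"
  shows "x < v \<and> v < y"
proof -
  have xy': "x < y" "y < n" using D_mem[OF xy] by auto
  from uv(3) consider "v = Suc u mod n" | "u = Suc v mod n" | "(u,v) \<in> D" | "(v,u) \<in> D"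
    unfolding ed_def by blast
  then show ?thesis
  proof cases
    case 1
    have "Suc u < n" using s xy' by auto
    then have "v = Suc u" using 1 by simp
    then show ?thesis using s nx by auto
  next
    case 2
    show ?thesis
    proof (cases "Suc v < n")
      case True
      then have "u = Suc v" using 2 by simp
      then show ?thesis using s nx by auto
    next
      case False
      then have "Suc v = n" using uv by auto
      then have "u = 0" using 2 by simp
      then show ?thesis using s by auto
    qed
  next
    case 3
    have uv': "u < v" using D_mem[OF 3] by auto
    show ?thesis
    proof (rule ccontr)
      assume "\<not> (x < v \<and> v < y)"
      then have "y < v" using uv' s nx by auto
      then show False using D_cross[OF xy 3] s by auto
    qed
  next
    case 4
    have uv': "v < u" using D_mem[OF 4] by auto
    show ?thesis
    proof (rule ccontr)
      assume "\<not> (x < v \<and> v < y)"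
      then have "v < x" using uv' s nx by auto
      then show False using D_cross[OF 4 xy] s by auto
    qed
  qed
qed

lemma side_ed:
  assumes xy: "(x,y) \<in> D" and uv: "u < n" "v < n" "ed u v" and nx: "u \<noteq> x" "u \<noteq> y" "v \<noteq> x" "v \<noteq> y"
  shows "(x < u \<and> u < y) \<longleftrightarrow> (x < v \<and> v < y)"
proof
  assume "x < u \<and> u < y" then show "x < v \<and> v < y" using side_step[OF xy uv] nx by blast
next
  have e: "ed v u" using uv(3) ed_sym by simp
  assume "x < v \<and> v < y" then show "x < u \<and> u < y" using side_step[OF xy uv(2,1) e] nx by blast
qed

lemma diag_split:
  assumes P: "induced_path E P" and Q: "induced_path E Q" and PQ: "P \<union> Q = V" "P \<inter> Q = {}"
    and xy: "(x,y) \<in> D" and fx: "f x \<in> P" "f y \<in> P"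
  shows False
proof -
  have xy': "x < y" "y < n" "2 \<le> y - x" "\<not> (x = 0 \<and> y = n - 1)" using D_mem[OF xy] by auto
  obtain ys where ys: "ys \<noteq> []" "set ys = Q"
    "\<forall>i<length ys. \<forall>j<length ys. {ys!i, ys!j} \<in> E \<longleftrightarrow> (i = Suc j \<or> j = Suc i)"
    using Q unfolding induced_path_def by blast
  define idx where "idx v = inv_into {..<n} f v" for v
  have fim: "f ` {..<n} = V" using bij unfolding bij_betw_def by auto
  have idx: "idx v < n \<and> f (idx v) = v" if "v \<in> V" for v
  proof -
    have "v \<in> f ` {..<n}" using that fim by simp
    then show ?thesis unfolding idx_def by (metis inv_into_into f_inv_into_f lessThan_iff)
  qed
  have idxf: "idx (f j) = j" if "j < n" for j
    using idx[OF f_V[OF that]] f_inj that by blast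
  define sd where "sd i \<longleftrightarrow> x < i \<and> i < y" for i
  have QV: "q \<in> V" if "q \<in> Q" for q using that PQ by auto
  have Qn: "idx q \<noteq> x \<and> idx q \<noteq> y" if "q \<in> Q" for q
  proof -
    have "f (idx q) = q" using idx[OF QV[OF that]] by simp
    then show ?thesis using that fx PQ(2) by auto
  qed
  have ysQ: "ys ! t \<in> Q" if "t < length ys" for t using that ys(2) by auto
  have const: "t < length ys \<longrightarrow> sd (idx (ys!t)) = sd (idx (ys!0))" for t
  proof (induction t)
    case 0 then show ?case by simp
  next
    case (Suc t)
    show ?case
    proof
      assume t: "Suc t < length ys"
      let ?a = "idx (ys!t)" and ?b = "idx (ys!Suc t)"
      have a: "?a < n" "f ?a = ys!t" using idx[OF QV[OF ysQ]] t by auto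
      have b: "?b < n" "f ?b = ys!Suc t" using idx[OF QV[OF ysQ]] t by auto
      have "{ys!t, ys!Suc t} \<in> E" using ys(3) t by auto
      then have "ed ?a ?b" using E_iff[OF a(1) b(1)] a b by simp
      then have "sd ?a = sd ?b" unfolding sd_def using side_ed[OF xy a(1) b(1)] Qn ysQ t by auto
      then show "sd ?b = sd (idx (ys!0))" using Suc t by auto
    qed
  qed
  have allQ: "sd (idx q) = sd (idx (ys!0))" if "q \<in> Q" for q
  proof -
    have "q \<in> set ys" using that ys(2) by simp
    then obtain t where "t < length ys" "ys!t = q" by (auto simp: in_set_conv_nth)
    then show ?thesis using const by metis
  qed
  show False
  proof (cases "sd (idx (ys!0))")
    case True
    have inP: "f j \<in> P" if "j < n" "\<not> sd j" for j
    proof (rule ccontr)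
      assume "f j \<notin> P"
      then have "f j \<in> Q" using PQ f_V[OF that(1)] by auto
      then have "sd (idx (f j))" using allQ True by blast
      then have "sd j" using idxf[OF that(1)] by simp
      then show False using that by auto
    qed
    define M where "M = x + (n - y)"
    define ci where "ci t = (if t \<le> x then t else t - Suc x + y)" for t
    have M2: "2 \<le> M" using xy' unfolding M_def by auto
    have cin: "ci t < n" if "t \<le> M" for t using that xy' unfolding ci_def M_def by auto
    have cisd: "\<not> sd (ci t)" for t unfolding ci_def sd_def by auto
    show False
    proof (rule ip_cycle[OF P M2, of "\<lambda>t. f (ci t)"])
      show "inj_on (\<lambda>t. f (ci t)) {..M}"
      proof (rule inj_onI)
        fix a b assume ab: "a \<in> {..M}" "b \<in> {..M}" "f (ci a) = f (ci b)"
        then have "ci a = ci b" using f_inj cin by auto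
        then show "a = b" unfolding ci_def using xy' by (auto split: if_splits)
      qed
      show "f (ci t) \<in> P" if "t \<le> M" for t using inP cin[OF that] cisd by auto
      show "{f (ci t), f (ci (Suc t))} \<in> E" if t: "t < M" for t
      proof -
        have e: "ed (ci t) (ci (Suc t))"
        proof (cases "t < x")
          case True then show ?thesis unfolding ci_def using ed_Suc xy' by auto
        next
          case False
          show ?thesis
          proof (cases "t = x")
            case True then show ?thesis unfolding ci_def using ed_D[OF xy] by auto
          next
            case False
            then have "ci (Suc t) = Suc (ci t)" using \<open>\<not> t < x\<close> xy' unfolding ci_def by auto
            moreover have "ci (Suc t) < n" using cin t by auto
            ultimately show ?thesis using ed_Suc by auto
          qed
        qed
        then show ?thesis using E_iff cin t by auto
      qed
      have "ci 0 = 0" "ci M = n - 1" unfolding ci_def M_def using xy' by auto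
      then show "{f (ci 0), f (ci M)} \<in> E" using E_iff ed_0 n3 by auto
    qed
  next
    case False
    have inP: "f j \<in> P" if "j < n" "sd j" for j
    proof (rule ccontr)
      assume "f j \<notin> P"
      then have "f j \<in> Q" using PQ f_V[OF that(1)] by auto
      then have "\<not> sd (idx (f j))" using allQ False by blast
      then have "\<not> sd j" using idxf[OF that(1)] by simp
      then show False using that by auto
    qed
    define M where "M = y - x"
    have M2: "2 \<le> M" using xy' unfolding M_def by auto
    show False
    proof (rule ip_cycle[OF P M2, of "\<lambda>t. f (x + t)"])
      show "inj_on (\<lambda>t. f (x + t)) {..M}"
      proof (rule inj_onI)
        fix a b assume ab: "a \<in> {..M}" "b \<in> {..M}" "f (x + a) = f (x + b)"
        then have "x + a < n" "x + b < n" using xy' unfolding M_def by auto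
        then have "x + a = x + b" using f_inj ab by blast
        then show "a = b" by simp
      qed
      show "f (x + t) \<in> P" if tM: "t \<le> M" for t
      proof -
        consider "t = 0" | "t = M" | "0 < t \<and> t < M" using tM by linarith
        then show ?thesis
        proof cases
          case 1 then show ?thesis using fx by simp
        next
          case 2 then show ?thesis using fx xy' unfolding M_def by simp
        next
          case 3 then show ?thesis using inP xy' unfolding sd_def M_def by auto
        qed
      qed
      show "{f (x + t), f (x + Suc t)} \<in> E" if t: "t < M" for t
      proof -
        have "Suc (x + t) < n" using t xy' unfolding M_def by auto
        then have "ed (x + t) (x + Suc t)" using ed_Suc by auto
        then show ?thesis using E_iff \<open>Suc (x + t) < n\<close> by auto
      qed
      have "ed x y" using ed_D[OF xy] .
      then show "{f (x + 0), f (x + M)} \<in> E" using E_iff xy' unfolding M_def by auto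
    qed
  qed
qed

lemma noBad_of_partition:
  assumes P: "induced_path E P" and Q: "induced_path E Q" and PQ: "P \<union> Q = V" "P \<inter> Q = {}"
  shows noBad
  unfolding noBad_def
proof (intro allI impI)
  fix a b c w assume h: "a < b \<and> b < c \<and> (a, b) \<in> D \<and> (b, c) \<in> D \<and> (a, c) \<in> D \<and> w < n \<and> (w < a \<or> c < w) \<and> ed w a \<and> ed w c"
  have cn: "c < n" using h D_mem by blast
  have inV: "f a \<in> V" "f b \<in> V" "f c \<in> V" using f_V h cn by auto
  have PQ': "Q \<union> P = V" "Q \<inter> P = {}" using PQ by auto
  have ds1: False if "(i,j) \<in> D" "f i \<in> P" "f j \<in> P" for i j using diag_split[OF P Q PQ that] .
  have ds2: False if "(i,j) \<in> D" "f i \<in> Q" "f j \<in> Q" for i j using diag_split[OF Q P PQ' that] .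
  have "(f a \<in> P \<and> f b \<in> P) \<or> (f b \<in> P \<and> f c \<in> P) \<or> (f a \<in> P \<and> f c \<in> P) \<or>
        (f a \<in> Q \<and> f b \<in> Q) \<or> (f b \<in> Q \<and> f c \<in> Q) \<or> (f a \<in> Q \<and> f c \<in> Q)"
    using inV PQ(1) by blast
  then show False using ds1 ds2 h by blast
qed

end


lemma pw_dec:
  assumes sg: "simple_graph V E" and pw: "pathwidth V E \<le> 2"
  shows "\<exists>Bs. path_decomposition V E Bs \<and> (\<forall>B\<in>set Bs. card B \<le> 3)"
proof -
  let ?P = "\<lambda>k. \<exists>Bs. path_decomposition V E Bs \<and> (\<forall>B\<in>set Bs. card B \<le> k + 1)"
  have "path_decomposition V E [V]" unfolding path_decomposition_def
    using sg unfolding simple_graph_def by auto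
  then have "?P (card V)" by auto
  then have "?P (pathwidth V E)" unfolding pathwidth_def by (rule LeastI)
  then obtain Bs where "path_decomposition V E Bs" "\<forall>B\<in>set Bs. card B \<le> pathwidth V E + 1" by blast
  moreover have "\<forall>B\<in>set Bs. card B \<le> 3"
  proof
    fix B assume "B \<in> set Bs"
    then have "card B \<le> pathwidth V E + 1" using \<open>\<forall>B\<in>set Bs. card B \<le> pathwidth V E + 1\<close> by blast
    then show "card B \<le> 3" using pw by linarith
  qed
  ultimately show ?thesis by blast
qed

lemma dec_pw:
  assumes "path_decomposition V E Bs" "\<forall>B\<in>set Bs. card B \<le> 3"
  shows "pathwidth V E \<le> 2"
proof -
  have "\<exists>Bs. path_decomposition V E Bs \<and> (\<forall>B\<in>set Bs. card B \<le> 2 + 1)" using assms by auto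
  then show ?thesis unfolding pathwidth_def by (rule Least_le)
qed

theorem propositionp:
  fixes V :: "'a set" and E :: "'a set set" and n :: nat
  assumes "simple_graph V E" and "card V = n"
  shows "(outerplanar_triangulation V E \<and> pathwidth V E \<le> 2) \<longleftrightarrow> (V, E) \<in> PW2 n"
proof
  assume L: "outerplanar_triangulation V E \<and> pathwidth V E \<le> 2"
  then obtain f D where o: "3 \<le> card V" "bij_betw f {..<card V} V"
    "D \<subseteq> {(i, j). i < j \<and> j < card V \<and> 2 \<le> j - i \<and> \<not> (i = 0 \<and> j = card V - 1)}"
    "\<forall>(a, b)\<in>D. \<forall>(c, d)\<in>D. \<not> (a < c \<and> c < b \<and> b < d)" "card D = card V - 3"
    "E = {{f i, f (Suc i mod card V)} | i. i < card V} \<union> (\<lambda>(i, j). {f i, f j}) ` D"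
    unfolding outerplanar_triangulation_def by blast
  interpret g: gtri "card V" D V E f
    by unfold_locales (fact o(1), fact o(3), fact o(4), fact o(5), fact o(2), fact o(6))
  obtain Bs where "path_decomposition V E Bs" "\<forall>B\<in>set Bs. card B \<le> 3"
    using pw_dec[OF assms(1)] L by blast
  then have "g.noBad" by (rule g.noBad_of_pd)
  then obtain Vu Vv where "Vu \<union> Vv = V" "Vu \<inter> Vv = {}" "induced_path E Vu" "induced_path E Vv"
    using g.paths_exist by blast
  then show "(V, E) \<in> PW2 n" unfolding PW2_def using L assms(2) by auto
next
  assume R: "(V, E) \<in> PW2 n"
  then have ot: "outerplanar_triangulation V E" and
    ex: "\<exists>Vu Vv. Vu \<union> Vv = V \<and> Vu \<inter> Vv = {} \<and> induced_path E Vu \<and> induced_path E Vv"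
    unfolding PW2_def by auto
  then obtain f D where o: "3 \<le> card V" "bij_betw f {..<card V} V"
    "D \<subseteq> {(i, j). i < j \<and> j < card V \<and> 2 \<le> j - i \<and> \<not> (i = 0 \<and> j = card V - 1)}"
    "\<forall>(a, b)\<in>D. \<forall>(c, d)\<in>D. \<not> (a < c \<and> c < b \<and> b < d)" "card D = card V - 3"
    "E = {{f i, f (Suc i mod card V)} | i. i < card V} \<union> (\<lambda>(i, j). {f i, f j}) ` D"
    unfolding outerplanar_triangulation_def by blast
  interpret g: gtri "card V" D V E f
    by unfold_locales (fact o(1), fact o(3), fact o(4), fact o(5), fact o(2), fact o(6))
  obtain Vu Vv where p: "Vu \<union> Vv = V" "Vu \<inter> Vv = {}" "induced_path E Vu" "induced_path E Vv"
    using ex by blast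
  have "g.noBad" using g.noBad_of_partition[OF p(3,4,1,2)] .
  then obtain Bs where "path_decomposition V E Bs" "\<forall>B\<in>set Bs. card B \<le> 3"
    using g.pd_exists by blast
  then have "pathwidth V E \<le> 2" by (rule dec_pw)
  then show "outerplanar_triangulation V E \<and> pathwidth V E \<le> 2" using ot by simp
qed


end
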